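(* There is a positive absolute constant $k_4$ such that for every integer $c\ge 3$, written as $c=q_1^{a_1}\cdots q_\omega^{a_\omega}$ with $q_i$ distinct primes and $a_i\ge 1$, $$G_c^{2/\varphi(c)}>k_4\prod_{i=1}^{\omega} q_i^{\,2a_i-1-\frac{2}{\varphi(c)}E_c(q_i)}\left(\frac{q_i-1}{2}\right)^2.$$
   Context: For a positive integer $n$, $R(n)$ denotes the product of the distinct primes dividing $n$. $\varphi$ is Euler's totient function. For $c\ge3$, $G_c$ is the product of $R(abc)$ over all pairs of positive integers $(a,b)$ with $a+b=c$, $a<b$, $\gcd(a,b)=1$ (there are $\varphi(c)/2$ such pairs), so $G_c^{2/\varphi(c)}$ is the geometric mean of these radicals. For $c$ with distinct prime factors $q_1,\dots,q_\omega$ and real $x\ne0$, $E_c(x)=\sum_{S\subseteq\{1,\dots,\omega\}}(-1)^{|S|}\lfloor c/(x\prod_{j\in S}q_j)\rfloor$. *)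

theory Defs
  imports "HOL-Number_Theory.Number_Theory"
begin

definition rad :: "nat \<Rightarrow> nat" where
  "rad n = (\<Prod>p\<in>prime_factors n. p)"

definition Gc :: "nat \<Rightarrow> nat" where
  "Gc c = (\<Prod>a\<in>{a. 0 < a \<and> a < c - a \<and> coprime a (c - a)}. rad (a * (c - a) * c))"

definition Ec :: "nat \<Rightarrow> real \<Rightarrow> int" where
  "Ec c x = (\<Sum>S\<in>Pow (prime_factors c).
      (-1) ^ card S * \<lfloor>real c / (x * real (\<Prod>q\<in>S. q))\<rfloor>)"

end

theory Submission
  imports Defs
begin



lemma rad_pos: "rad n > 0"
  unfolding rad_def by (intro prod_pos) (auto intro: prime_gt_0_nat)

lemma rad_dvd: assumes "n > 0" shows "rad n dvd n"
proof -
  have "rad n dvd (\<Prod>p\<in>prime_factors n. p ^ multiplicity p n)"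
    unfolding rad_def
    by (intro prod_dvd_prod dvd_power) (auto simp: prime_factors_multiplicity)
  also have "\<dots> = n" using assms by (simp add: prod_prime_factors)
  finally show ?thesis .
qed

lemma rad_le: "n > 0 \<Longrightarrow> rad n \<le> n"
  using rad_dvd dvd_imp_le by blast

lemma rad_mult: assumes "coprime x y" "x > 0" "y > 0" shows "rad (x * y) = rad x * rad y"
proof -
  have "prime_factors (x*y) = prime_factors x \<union> prime_factors y"
    using assms by (simp add: prime_factors_product)
  moreover have "prime_factors x \<inter> prime_factors y = {}"
    using assms(1) by (auto dest: coprime_common_divisor_nat simp: in_prime_factors_iff prime_gt_1_nat)
  ultimately show ?thesis unfolding rad_def by (simp add: prod.union_disjoint)
qed

lemma sq_part: assumes "n > 0" shows "\<exists>s. s^2 dvd n \<and> n \<le> s^2 * rad n"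
proof -
  let ?P = "prime_factors n"
  let ?m = "\<lambda>p. multiplicity p n"
  define s where "s = (\<Prod>p\<in>?P. p ^ (?m p div 2))"
  have s2: "s^2 = (\<Prod>p\<in>?P. p ^ (2 * (?m p div 2)))"
    unfolding s_def prod_power_distrib by (intro prod.cong refl) (simp add: power_mult[symmetric] mult.commute)
  have "n = (\<Prod>p\<in>?P. p ^ ?m p)" using assms by (simp add: prod_prime_factors)
  also have "\<dots> = (\<Prod>p\<in>?P. p ^ (2 * (?m p div 2)) * p ^ (?m p mod 2))"
    by (intro prod.cong refl) (simp flip: power_add)
  also have "\<dots> = s^2 * (\<Prod>p\<in>?P. p ^ (?m p mod 2))"
    by (simp add: prod.distrib s2)
  finally have eq: "n = s^2 * (\<Prod>p\<in>?P. p ^ (?m p mod 2))" .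
  have "(\<Prod>p\<in>?P. p ^ (?m p mod 2)) \<le> (\<Prod>p\<in>?P. p)"
  proof (intro prod_mono conjI)
    fix p assume "p \<in> ?P"
    then have "p > 0" by (auto intro: prime_gt_0_nat)
    have "?m p mod 2 = 0 \<or> ?m p mod 2 = 1" by linarith
    then show "p ^ (?m p mod 2) \<le> p" using \<open>p>0\<close> by auto
  qed simp
  then have "n \<le> s^2 * rad n" unfolding rad_def by (subst eq) simp
  moreover have "s^2 dvd n" by (subst eq) simp
  ultimately show ?thesis by blast
qed




lemma fact_exp_bound: "real n ^ n \<le> exp (real n) * fact n"
proof (induction n)
  case 0 then show ?case by simp
next
  case (Suc n)
  have key: "(real n + 1) ^ n \<le> exp 1 * real n ^ n"
  proof (cases "n = 0")
    case True then show ?thesis by simp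
  next
    case False
    then have np: "real n > 0" by simp
    have "real n + 1 = real n * (1 + 1 / real n)"
      using np by (simp add: field_simps)
    then have "(real n + 1) ^ n = (real n * (1 + 1 / real n)) ^ n" by simp
    also have "\<dots> = real n ^ n * (1 + 1 / real n) ^ n" by (simp add: power_mult_distrib)
    also have "(1 + 1 / real n) ^ n \<le> exp (1 / real n) ^ n"
      by (intro power_mono) (auto simp: add.commute[of 1] exp_ge_add_one_self_aux intro: order.trans[OF _ exp_ge_add_one_self])
    also have "exp (1 / real n) ^ n = exp 1"
      using np by (simp add: exp_of_nat_mult[symmetric])
    finally show ?thesis using np by (simp add: mult.commute mult_left_mono)
  qed
  have "real (Suc n) ^ Suc n = (real n + 1) * (real n + 1) ^ n" by (simp add: add.commute)
  also have "\<dots> \<le> (real n + 1) * (exp 1 * real n ^ n)"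
    by (intro mult_left_mono key) auto
  also have "\<dots> \<le> (real n + 1) * (exp 1 * (exp (real n) * fact n))"
    by (intro mult_left_mono Suc.IH) auto
  also have "\<dots> = exp (real (Suc n)) * fact (Suc n)"
    by (simp add: exp_add algebra_simps)
  finally show ?case .
qed

lemma ln_fact_bound: "real n * ln (real n) - real n \<le> ln (fact n)"
proof (cases "n = 0")
  case True then show ?thesis by simp
next
  case False
  have "ln (real n ^ n) \<le> ln (exp (real n) * fact n)"
    using False fact_exp_bound[of n] by (subst ln_le_cancel_iff) auto
  then show ?thesis using False by (simp add: ln_mult ln_realpow)
qed



lemma prod_set_ge_fact:
  "finite S \<Longrightarrow> 0 \<notin> S \<Longrightarrow> card S = n \<Longrightarrow> fact n \<le> (\<Prod>S :: nat)"
proof (induction n arbitrary: S)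
  case 0 then show ?case by simp
next
  case (Suc n)
  have fin: "finite S" and z: "0 \<notin> S" and cS: "card S = Suc n" by (fact Suc.prems)+
  have ne: "S \<noteq> {}" using cS by auto
  define m where "m = Max S"
  have mS: "m \<in> S" using fin ne unfolding m_def by (rule Max_in)
  have sub: "S \<subseteq> {1..m}"
  proof
    fix x assume x: "x \<in> S"
    have "x \<le> m" unfolding m_def using fin x by (rule Max_ge)
    moreover have "x \<noteq> 0" using x z by metis
    ultimately show "x \<in> {1..m}" by simp
  qed
  have "card S \<le> card {1..m}" by (rule card_mono[OF _ sub]) simp
  then have nm: "Suc n \<le> m" using cS by simp
  have c2: "card (S - {m}) = n" using cS mS fin by simp
  have IH: "fact n \<le> \<Prod>(S - {m})"
    using fin z c2 by (intro Suc.IH) auto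
  have eq: "(\<Prod>S) = m * \<Prod>(S - {m})"
    using fin mS by (rule prod.remove)
  have "fact (Suc n) = Suc n * fact n" by simp
  also have "\<dots> \<le> m * \<Prod>(S - {m})" by (rule mult_le_mono[OF nm IH])
  finally show ?case using eq by simp
qed


lemma ln_le_2sqrt: assumes "y > 0" shows "ln y \<le> 2 * sqrt y"
proof -
  have "ln y = 2 * ln (sqrt y)" using assms by (simp add: ln_sqrt)
  also have "ln (sqrt y) \<le> sqrt y - 1" using assms by (intro ln_le_minus_one) auto
  finally show ?thesis by simp
qed

lemma step_ineq: assumes "x \<ge> 1" shows "ln (x+1) / (x+1)^2 \<le> 4 / sqrt x - 4 / sqrt (x+1)"
proof -
  define a where "a = sqrt x"
  define b where "b = sqrt (x+1)"
  have a: "a > 0" "a^2 = x" using assms by (auto simp: a_def)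
  have b: "b > 0" "b^2 = x+1" using assms by (auto simp: b_def)
  have ab: "a \<le> b" unfolding a_def b_def by simp
  have "ln (x+1) \<le> 2 * b" unfolding b_def using assms by (intro ln_le_2sqrt) auto
  then have "ln (x+1) / (x+1)^2 \<le> 2 * b / b^4"
  proof -
    have "(x+1)^2 = b^4" using b(2) by (metis power_mult numeral_times_numeral semiring_norm(12) num_double)
    then show ?thesis using b \<open>ln (x+1) \<le> 2 * b\<close> by (simp add: divide_right_mono)
  qed
  also have "2 * b / b^4 = 2 / b^3" using b(1) by (simp add: field_simps eval_nat_numeral)
  also have "2 / b^3 \<le> 4 / (a * b * (a + b))"
  proof -
    have h1: "a * b \<le> b * b" using ab b by (intro mult_right_mono) auto
    have h2: "a + b \<le> 2 * b" using ab by simp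
    have "a * b * (a + b) \<le> (b * b) * (2 * b)"
      using h1 h2 a b by (intro mult_mono) auto
    then have "a * b * (a + b) \<le> 2 * b^3" by (simp add: power3_eq_cube algebra_simps)
    moreover have "a * b * (a + b) > 0" using a b by simp
    ultimately have "4 / (2 * b^3) \<le> 4 / (a * b * (a + b))"
      using a(1) b(1) by (intro divide_left_mono) simp_all
    moreover have "4 / (2 * b^3) = 2 / b^3" by simp
    ultimately show ?thesis by simp
  qed
  also have "4 / (a * b * (a + b)) = 4 / a - 4 / b"
  proof -
    have "(b - a) * (a + b) = 1" using a b by (simp add: algebra_simps power2_eq_square)
    then have ba: "b - a = 1 / (a + b)" using a b by (simp add: eq_divide_eq)
    have "4 / a - 4 / b = 4 * (b - a) / (a * b)" using a(1) b(1) by (simp add: field_simps)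
    also have "\<dots> = 4 / (a * b * (a + b))" unfolding ba by simp
    finally show ?thesis by simp
  qed
  finally show ?thesis by (simp add: a_def b_def)
qed

lemma sum_ln_sq: "n \<ge> 1 \<Longrightarrow> (\<Sum>t\<in>{1..n}. ln (real t) / real t ^ 2) \<le> 4 - 4 / sqrt (real n)"
proof (induction n rule: dec_induct)
  case base then show ?case by simp
next
  case (step n)
  have "(\<Sum>t\<in>{1..Suc n}. ln (real t) / real t ^ 2) = (\<Sum>t\<in>{1..n}. ln (real t) / real t ^ 2) + ln (real n + 1) / (real n + 1)^2"
    by (simp add: add.commute)
  also have "\<dots> \<le> 4 - 4 / sqrt (real n) + (4 / sqrt (real n) - 4 / sqrt (real n + 1))"
    using step by (intro add_mono step_ineq) auto
  finally show ?case by (simp add: add.commute)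
qed

lemma sum_ln_sq4: "(\<Sum>t\<in>{1..n}. ln (real t) / real t ^ 2) \<le> 4"
proof (cases "n \<ge> 1")
  case True then show ?thesis using sum_ln_sq[of n] by (smt (verit) divide_nonneg_nonneg real_sqrt_ge_zero of_nat_0_le_iff)
qed simp




lemma card_multiples: assumes "d > 0" shows "card {a\<in>{1..n}. d dvd a} = n div (d::nat)"
proof -
  have "{a\<in>{1..n}. d dvd a} = (\<lambda>k. d * k) ` {1..n div d}"
  proof safe
    fix a assume a: "a \<in> {1..n}" "d dvd a"
    then obtain k where k: "a = d * k" by blast
    then have "k \<ge> 1" using a by (cases k) auto
    moreover have "k \<le> n div d" using a k assms
      by (simp add: less_eq_div_iff_mult_less_eq mult.commute)
    ultimately show "a \<in> (\<lambda>k. d * k) ` {1..n div d}" using k by auto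
  next
    fix k assume k: "k \<in> {1..n div d}"
    then have "d * k \<le> n" using assms
      by (simp add: less_eq_div_iff_mult_less_eq mult.commute)
    moreover have "d * k \<ge> 1" using k assms by simp
    ultimately show "d * k \<in> {1..n}" by simp
  qed simp
  also have "card \<dots> = card {1..n div d}"
    by (intro card_image) (use assms in \<open>auto simp: inj_on_def\<close>)
  finally show ?thesis by simp
qed

lemma loss_pointwise:
  assumes "a \<in> {1..n}"
  shows "ln (real a) - ln (real (rad a)) \<le> 2 * (\<Sum>t\<in>{1..n}. if t^2 dvd a then ln (real t) else 0)"
proof -
  have a0: "a > 0" using assms by simp
  obtain s where s: "s^2 dvd a" "a \<le> s^2 * rad a" using sq_part[OF a0] by blast
  have s0: "s > 0" using s(1) a0 by (cases s) auto
  have "s \<le> s^2" by (simp add: power2_eq_square)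
  also have "s^2 \<le> a" using s(1) a0 by (rule dvd_imp_le)
  finally have sa: "s \<le> a" .
  have "real a \<le> real s ^ 2 * real (rad a)" using s(2) by (metis of_nat_le_iff of_nat_mult of_nat_power)
  then have "ln (real a) \<le> ln (real s ^ 2 * real (rad a))"
    using a0 by (subst ln_le_cancel_iff) auto
  also have "\<dots> = 2 * ln (real s) + ln (real (rad a))"
    using s0 rad_pos[of a] by (simp add: ln_mult ln_realpow)
  finally have 1: "ln (real a) - ln (real (rad a)) \<le> 2 * ln (real s)" by simp
  have "ln (real s) = (if s^2 dvd a then ln (real s) else 0)" using s(1) by simp
  also have "\<dots> \<le> (\<Sum>t\<in>{1..n}. if t^2 dvd a then ln (real t) else 0)"
  proof (rule member_le_sum[where f = "\<lambda>t. if t^2 dvd a then ln (real t) else 0"])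
    show "s \<in> {1..n}" using s0 sa assms by auto
  qed auto
  finally show ?thesis using 1 by simp
qed



lemma loss_total: "(\<Sum>a\<in>{1..n}. ln (real a) - ln (real (rad a))) \<le> 8 * real n"
proof -
  have "(\<Sum>a\<in>{1..n}. ln (real a) - ln (real (rad a)))
      \<le> (\<Sum>a\<in>{1..n}. 2 * (\<Sum>t\<in>{1..n}. if t^2 dvd a then ln (real t) else 0))"
    by (intro sum_mono loss_pointwise)
  also have "\<dots> = 2 * (\<Sum>t\<in>{1..n}. \<Sum>a\<in>{1..n}. if t^2 dvd a then ln (real t) else 0)"
    by (simp only: sum_distrib_left[symmetric] sum.swap[of "\<lambda>a t. if t^2 dvd a then ln (real t) else 0" "{1..n}" "{1..n}"])
  also have "(\<Sum>t\<in>{1..n}. \<Sum>a\<in>{1..n}. if t^2 dvd a then ln (real t) else 0)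
       = (\<Sum>t\<in>{1..n}. ln (real t) * real (n div t^2))"
  proof (intro sum.cong refl)
    fix t assume t: "t \<in> {1..n}"
    have "(\<Sum>a\<in>{1..n}. if t^2 dvd a then ln (real t) else 0) = (\<Sum>a\<in>{a\<in>{1..n}. t^2 dvd a}. ln (real t))"
      by (rule sum.inter_filter[symmetric]) simp
    also have "\<dots> = ln (real t) * real (n div t^2)"
    proof -
      have "t^2 > 0" using t by simp
      then have "card {a\<in>{1..n}. t^2 dvd a} = n div t^2" by (rule card_multiples)
      then show ?thesis by (simp only: sum_constant mult.commute)
    qed
    finally show "(\<Sum>a\<in>{1..n}. if t^2 dvd a then ln (real t) else 0) = ln (real t) * real (n div t^2)" .
  qed
  also have "(\<Sum>t\<in>{1..n}. ln (real t) * real (n div t^2)) \<le> (\<Sum>t\<in>{1..n}. ln (real t) * (real n / real t ^ 2))"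
  proof (intro sum_mono mult_left_mono)
    fix t assume t: "t \<in> {1..n}"
    show "real (n div t^2) \<le> real n / real t ^ 2"
      using of_nat_div_le_of_nat[of n "t^2"] by (simp only: of_nat_power)
    show "0 \<le> ln (real t)" using t by (intro ln_ge_zero) simp
  qed
  also have "\<dots> = real n * (\<Sum>t\<in>{1..n}. ln (real t) / real t ^ 2)"
    by (simp add: sum_distrib_left mult.commute)
  also have "\<dots> \<le> real n * 4" by (intro mult_left_mono sum_ln_sq4) simp
  finally show ?thesis by simp
qed




lemma card_odd_primes_le:
  assumes "finite S" "\<forall>q\<in>S. prime (q::nat) \<and> q \<le> m"
  shows "card S \<le> 1 + (m - 1) div 2"
proof -
  have "S \<subseteq> {2} \<union> (\<lambda>i. 2 * i + 1) ` {1..(m - 1) div 2}"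
  proof
    fix q assume q: "q \<in> S"
    then have pq: "prime q" "q \<le> m" using assms by auto
    show "q \<in> {2} \<union> (\<lambda>i. 2 * i + 1) ` {1..(m - 1) div 2}"
    proof (cases "q = 2")
      case False
      then have "odd q" using pq prime_odd_nat[of q] prime_gt_1_nat[of q] by auto
      then obtain i where i: "q = 2 * i + 1" using oddE by blast
      have "i \<ge> 1" using i pq(1) by (cases i) auto
      moreover have "i \<le> (m - 1) div 2" using i pq(2) by linarith
      ultimately show ?thesis using i by auto
    qed simp
  qed
  then have "card S \<le> card ({2} \<union> (\<lambda>i. 2 * i + 1) ` {1..(m - 1) div 2})"
    by (intro card_mono) auto
  also have "\<dots> \<le> card {2::nat} + card ((\<lambda>i. 2 * i + 1) ` {1..(m - 1) div 2})"
    by (rule card_Un_le)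
  also have "card ((\<lambda>i. 2 * i + 1) ` {1..(m - 1) div 2}) \<le> card {1..(m - 1) div 2}"
    by (rule card_image_le) simp
  finally show ?thesis by simp
qed

lemma ratio_prod_bound:
  "finite S \<Longrightarrow> S \<noteq> {} \<Longrightarrow> \<forall>q\<in>S. prime (q::nat) \<Longrightarrow> card S = n \<Longrightarrow>
   (\<Prod>q\<in>S. real q / (real q - 1))^2 \<le> 4 * (2 * real n - 1)"
proof (induction n arbitrary: S rule: less_induct)
  case (less n S)
  define m where "m = Max S"
  have mS: "m \<in> S" using less.prems unfolding m_def by (intro Max_in) auto
  have m2: "real m \<ge> 2" using mS less.prems prime_ge_2_nat by force
  have eq: "(\<Prod>q\<in>S. real q / (real q - 1)) = real m / (real m - 1) * (\<Prod>q\<in>S - {m}. real q / (real q - 1))"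
    using less.prems(1) mS by (rule prod.remove)
  show ?case
  proof (cases "S - {m} = {}")
    case True
    then have "S = {m}" using mS by auto
    then have n1: "n = 1" using less.prems by simp
    have "real m / (real m - 1) \<le> 2" using m2 by (simp add: field_simps)
    moreover have "real m / (real m - 1) \<ge> 0" using m2 by simp
    ultimately have "(real m / (real m - 1))^2 \<le> 2^2" by (intro power_mono) auto
    then show ?thesis using \<open>S = {m}\<close> n1 by simp
  next
    case False
    have cS': "card (S - {m}) = n - 1" using less.prems mS by simp
    have n2: "n \<ge> 2"
    proof -
      have "card (S - {m}) > 0" using False less.prems by (simp add: card_gt_0_iff)
      then show ?thesis using cS' by linarith
    qed
    have IH: "(\<Prod>q\<in>S - {m}. real q / (real q - 1))^2 \<le> 4 * (2 * real (n - 1) - 1)"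
    proof (rule less.IH)
      show "n - 1 < n" using n2 by simp
      show "finite (S - {m})" using less.prems(1) by simp
      show "S - {m} \<noteq> {}" using False .
      show "\<forall>q\<in>S - {m}. prime q" using less.prems(3) by blast
      show "card (S - {m}) = n - 1" using cS' .
    qed
    have "n \<le> 1 + (m - 1) div 2"
      using card_odd_primes_le[of S m] less.prems unfolding m_def by (auto intro: Max_ge)
    moreover have "m \<ge> 2" using mS less.prems prime_ge_2_nat by blast
    ultimately have "2 * n \<le> m + 1" by presburger
    then have "real (2 * n) \<le> real (m + 1)" by (simp only: of_nat_le_iff)
    then have mn: "real m \<ge> 2 * real n - 1" by simp
    have r1: "real m / (real m - 1) \<le> (2 * real n - 1) / (2 * real n - 2)"
      using mn m2 n2 by (simp add: field_simps)
    have r0: "real m / (real m - 1) \<ge> 0" using m2 by simp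
    have "(\<Prod>q\<in>S. real q / (real q - 1))^2 = (real m / (real m - 1))^2 * (\<Prod>q\<in>S - {m}. real q / (real q - 1))^2"
      unfolding eq by (rule power_mult_distrib)
    also have "\<dots> \<le> ((2 * real n - 1) / (2 * real n - 2))^2 * (4 * (2 * real (n - 1) - 1))"
      by (intro mult_mono power_mono r1 r0 IH) auto
    also have "\<dots> \<le> 4 * (2 * real n - 1)"
    proof -
      have nn: "real (n - 1) = real n - 1" using n2 by simp
      have p: "2 * real n - 2 > 0" using n2 by simp
      have "((2 * real n - 1) / (2 * real n - 2))^2 * (4 * (2 * real n - 3))
            = 4 * (2 * real n - 1) * ((2 * real n - 1) * (2 * real n - 3)) / (2 * real n - 2)^2"
        by (simp add: power2_eq_square field_simps)
      also have "\<dots> \<le> 4 * (2 * real n - 1) * (2 * real n - 2)^2 / (2 * real n - 2)^2"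
      proof (intro divide_right_mono mult_left_mono)
        have "(2 * real n - 2)^2 - (2 * real n - 1) * (2 * real n - 3) = 1"
          by (simp add: power2_eq_square algebra_simps)
        then show "(2 * real n - 1) * (2 * real n - 3) \<le> (2 * real n - 2)^2" by linarith
        show "0 \<le> 4 * (2 * real n - 1)" using n2 by simp
      qed simp
      also have "\<dots> = 4 * (2 * real n - 1)" using p by simp
      finally show ?thesis using nn by (simp add: algebra_simps)
    qed
    finally show ?thesis .
  qed
qed

lemma c_over_phi:
  assumes "c > 0" "prime_factors c \<noteq> {}"
  shows "(real c / real (totient c))^2 \<le> 8 * real (card (prime_factors c))"
proof -
  let ?P = "prime_factors c"
  have "real (totient c) = real c * (\<Prod>p\<in>?P. 1 - 1 / real p)" by (rule totient_formula2)
  then have "real c / real (totient c) = 1 / (\<Prod>p\<in>?P. 1 - 1 / real p)"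
    using assms by (simp add: field_simps)
  also have "\<dots> = (\<Prod>p\<in>?P. real p / (real p - 1))"
  proof -
    have "(\<Prod>p\<in>?P. 1 - 1 / real p) * (\<Prod>p\<in>?P. real p / (real p - 1)) = 1"
    proof -
      have "(\<Prod>p\<in>?P. 1 - 1 / real p) * (\<Prod>p\<in>?P. real p / (real p - 1)) = (\<Prod>p\<in>?P. (1 - 1 / real p) * (real p / (real p - 1)))"
        by (rule prod.distrib[symmetric])
      also have "\<dots> = (\<Prod>p\<in>?P. 1)"
      proof (intro prod.cong refl)
        fix p assume "p \<in> ?P"
        then have "prime p" by (simp add: prime_factors_multiplicity)
        then have "p \<ge> 2" by (rule prime_ge_2_nat)
        then have "real p \<ge> 2" by simp
        then show "(1 - 1 / real p) * (real p / (real p - 1)) = 1" by (simp add: field_simps)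
      qed
      finally show ?thesis by simp
    qed
    then have "inverse (\<Prod>p\<in>?P. 1 - 1 / real p) = (\<Prod>p\<in>?P. real p / (real p - 1))"
      by (rule inverse_unique)
    then show ?thesis by (simp add: inverse_eq_divide)
  qed
  finally have r: "real c / real (totient c) = (\<Prod>p\<in>?P. real p / (real p - 1))" .
  have "(\<Prod>p\<in>?P. real p / (real p - 1))^2 \<le> 4 * (2 * real (card ?P) - 1)"
    using assms by (intro ratio_prod_bound) auto
  then show ?thesis unfolding r by simp
qed




lemma alt_sum_Pow: "finite D \<Longrightarrow> (\<Sum>T\<in>Pow D. (-1::int) ^ card T) = (if D = {} then 1 else 0)"
proof (cases "D = {}")
  case False
  assume fin: "finite D"
  have "(\<Sum>T\<in>Pow D. (-1::int) ^ card T) = 0"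
  proof (rule sum_alternating_cancels)
    show "finite (Pow D)" using fin by simp
    have e: "{x. x \<in> Pow D \<and> even (card x)} = {T. T \<subseteq> D \<and> {} \<subseteq> T \<and> even (card T)}" by auto
    have o: "{x. x \<in> Pow D \<and> odd (card x)} = {T. T \<subseteq> D \<and> {} \<subseteq> T \<and> odd (card T)}" by auto
    show "card {x. x \<in> Pow D \<and> even (card x)} = card {x. x \<in> Pow D \<and> odd (card x)}"
      unfolding e o using fin False by (intro card_subsupersets_even_odd) auto
  qed
  then show ?thesis using False by simp
qed simp

lemma prod_primes_dvd:
  "finite S \<Longrightarrow> \<forall>p\<in>S. prime (p::nat) \<and> p dvd m \<Longrightarrow> (\<Prod>S) dvd m"
proof (induction S rule: finite_induct)
  case (insert p S)
  have "coprime p (\<Prod>S)"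
  proof -
    have "\<not> p dvd \<Prod>S"
    proof
      assume "p dvd \<Prod>S"
      then obtain r where "r \<in> S" "p dvd r" using insert prime_dvd_prod_iff[of S p "\<lambda>x. x"] by auto
      then have "p = r" using insert by (auto simp: primes_dvd_imp_eq)
      then show False using insert \<open>r \<in> S\<close> by simp
    qed
    then show ?thesis using insert by (simp add: prime_imp_coprime)
  qed
  then show ?case using insert by (simp add: divides_mult)
qed simp

lemma Ec_nonneg:
  assumes q: "q \<in> prime_factors c" and c: "c > 0"
  shows "Ec c (real q) \<ge> 0"
proof -
  let ?P = "prime_factors c"
  define N where "N = c div q"
  have qp: "q > 0" using q by (simp add: prime_factors_multiplicity prime_gt_0_nat)
  have pos: "\<And>S. S \<in> Pow ?P \<Longrightarrow> (\<Prod>S) > 0"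
  proof -
    fix S assume "S \<in> Pow ?P"
    then have "\<forall>p\<in>S. p > 0" by (auto simp: prime_factors_multiplicity prime_gt_0_nat)
    then show "(\<Prod>S) > 0" by (simp add: prod_pos)
  qed
  have fl: "\<lfloor>real c / (real q * real (\<Prod>S))\<rfloor> = int (card {m\<in>{1..N}. (\<Prod>S) dvd m})"
    if "S \<in> Pow ?P" for S
  proof -
    have "real q * real (\<Prod>S) = real (q * \<Prod>S)" by simp
    then have "\<lfloor>real c / (real q * real (\<Prod>S))\<rfloor> = int (c div (q * \<Prod>S))"
      by (simp only: floor_divide_of_nat_eq)
    also have "c div (q * \<Prod>S) = N div (\<Prod>S)" unfolding N_def by (simp add: div_mult2_eq)
    also have "\<dots> = card {m\<in>{1..N}. (\<Prod>S) dvd m}" by (rule card_multiples[OF pos[OF that], symmetric])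
    finally show ?thesis .
  qed
  have "Ec c (real q) = (\<Sum>S\<in>Pow ?P. (-1) ^ card S * int (card {m\<in>{1..N}. (\<Prod>S) dvd m}))"
    unfolding Ec_def
  proof (intro sum.cong refl)
    fix S assume "S \<in> Pow ?P"
    then show "(-1) ^ card S * \<lfloor>real c / (real q * real (\<Prod>S))\<rfloor> = (-1) ^ card S * int (card {m\<in>{1..N}. (\<Prod>S) dvd m})"
      by (simp only: fl)
  qed
  also have "\<dots> = (\<Sum>S\<in>Pow ?P. \<Sum>m\<in>{1..N}. if (\<Prod>S) dvd m then (-1) ^ card S else 0)"
  proof (intro sum.cong refl)
    fix S
    have "(\<Sum>m\<in>{1..N}. if (\<Prod>S) dvd m then (-1::int) ^ card S else 0) = (\<Sum>m\<in>{m\<in>{1..N}. (\<Prod>S) dvd m}. (-1) ^ card S)"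
      by (rule sum.inter_filter[symmetric]) simp
    also have "\<dots> = (-1) ^ card S * int (card {m\<in>{1..N}. (\<Prod>S) dvd m})" by simp
    finally show "(-1) ^ card S * int (card {m\<in>{1..N}. (\<Prod>S) dvd m}) = (\<Sum>m\<in>{1..N}. if (\<Prod>S) dvd m then (-1::int) ^ card S else 0)" by simp
  qed
  also have "\<dots> = (\<Sum>m\<in>{1..N}. \<Sum>S\<in>Pow ?P. if (\<Prod>S) dvd m then (-1) ^ card S else 0)"
    by (rule sum.swap)
  also have "\<dots> \<ge> 0"
  proof (rule sum_nonneg)
    fix m assume m: "m \<in> {1..N}"
    have "(\<Sum>S\<in>Pow ?P. if (\<Prod>S) dvd m then (-1::int) ^ card S else 0) = (\<Sum>S\<in>{S\<in>Pow ?P. (\<Prod>S) dvd m}. (-1) ^ card S)"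
      by (rule sum.inter_filter[symmetric]) simp
    also have "{S\<in>Pow ?P. (\<Prod>S) dvd m} = Pow {p\<in>?P. p dvd m}"
    proof safe
      fix S x assume "S \<subseteq> ?P" "(\<Prod>S) dvd m" "x \<in> S"
      then show "x dvd m" using dvd_prodI[of S x "\<lambda>x. x"] finite_subset[of S ?P] by (meson dvd_trans finite_set_mset)
    next
      fix S assume S: "S \<subseteq> {p \<in> ?P. p dvd m}"
      show "(\<Prod>S) dvd m"
      proof (rule prod_primes_dvd)
        show "finite S" using S finite_subset[of S ?P] by auto
        show "\<forall>p\<in>S. prime p \<and> p dvd m" using S by (auto simp: prime_factors_multiplicity)
      qed
    qed auto
    also have "(\<Sum>S\<in>Pow {p\<in>?P. p dvd m}. (-1::int) ^ card S) = (if {p\<in>?P. p dvd m} = {} then 1 else 0)"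
      by (rule alt_sum_Pow) simp
    finally show "0 \<le> (\<Sum>S\<in>Pow ?P. if (\<Prod>S) dvd m then (-1::int) ^ card S else 0)" by simp
  qed
  finally show ?thesis .
qed




lemma coprime_diff_iff: "a \<le> (c::nat) \<Longrightarrow> coprime a (c - a) \<longleftrightarrow> coprime a c"
proof -
  assume "a \<le> c"
  then have "gcd (c - a) a = gcd c a" by (rule gcd_diff1_nat)
  then show ?thesis by (metis coprime_iff_gcd_eq_1 gcd.commute)
qed

lemma cop_aux: fixes a c :: nat assumes "a \<le> c" "coprime a c" shows "coprime (c - a) c" "coprime a (c - a)"
proof -
  show 2: "coprime a (c - a)" using assms coprime_diff_iff[of a c] by simp
  have "c - (c - a) = a" using assms by simp
  then have "coprime (c - a) (c - (c - a))" using 2 by (simp add: coprime_commute)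
  then show "coprime (c - a) c" using coprime_diff_iff[of "c - a" c] by simp
qed

lemma Gc_sq:
  assumes c: "c \<ge> 3"
  defines "U \<equiv> {a. 0 < a \<and> a < c \<and> coprime a c}"
  shows "Gc c ^ 2 = rad c ^ totient c * (\<Prod>a\<in>U. rad a) ^ 2"
proof -
  define A where "A = {a. 0 < a \<and> a < c - a \<and> coprime a (c - a)}"
  define f where "f a = rad (a * (c - a) * c)" for a
  have finU: "finite U" unfolding U_def by (rule finite_subset[of _ "{..<c}"]) auto
  have AU: "A = {a\<in>U. a < c - a}"
  proof (rule subset_antisym; rule subsetI)
    fix a assume "a \<in> A"
    then have a: "0 < a" "a < c - a" "coprime a (c - a)" unfolding A_def by auto
    then have "coprime a c" using coprime_diff_iff[of a c] by simp
    then show "a \<in> {a\<in>U. a < c - a}" using a unfolding U_def by auto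
  next
    fix a assume "a \<in> {a\<in>U. a < c - a}"
    then have a: "0 < a" "a < c - a" "coprime a c" unfolding U_def by auto
    then show "a \<in> A" unfolding A_def using cop_aux[of a c] by auto
  qed
  define B where "B = (\<lambda>a. c - a) ` A"
  have BU: "B = {a\<in>U. c - a < a}"
  proof safe
    fix b assume "b \<in> B"
    then obtain a where a: "a \<in> A" "b = c - a" unfolding B_def by auto
    then have "a \<in> U" "a < c - a" using AU by auto
    then have "0 < a" "a < c" "coprime a c" "a < c - a" unfolding U_def by auto
    then show "b \<in> U" "c - b < b" unfolding U_def a(2) using cop_aux[of a c] by auto
  next
    fix b assume b: "b \<in> U" "c - b < b"
    then have "0 < b" "b < c" "coprime b c" unfolding U_def by auto
    then have "c - b \<in> A" unfolding AU U_def using b(2) cop_aux[of b c] by auto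
    moreover have "b = c - (c - b)" using b unfolding U_def by simp
    ultimately show "b \<in> B" unfolding B_def by blast
  qed
  have UAB: "U = A \<union> B"
  proof -
    have "a \<noteq> c - a" if "a \<in> U" for a
    proof
      assume "a = c - a"
      then have "coprime a a" using that coprime_diff_iff[of a c] unfolding U_def by simp
      then have "a = 1" by simp
      then show False using \<open>a = c - a\<close> c by simp
    qed
    note ne = this
    show ?thesis
    proof (rule subset_antisym; rule subsetI)
      fix x assume x: "x \<in> U"
      then have "x \<noteq> c - x" by (rule ne)
      then have "x < c - x \<or> c - x < x" by linarith
      then show "x \<in> A \<union> B" using x unfolding AU BU by auto
    next
      fix x assume "x \<in> A \<union> B" then show "x \<in> U" unfolding AU BU by auto
    qed
  qed
  have disj: "A \<inter> B = {}" unfolding AU BU by auto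
  have injA: "inj_on (\<lambda>a. c - a) A" unfolding inj_on_def AU U_def by auto
  have fsym: "f (c - a) = f a" if "a \<in> A" for a
  proof -
    have "a < c" using that unfolding AU U_def by auto
    then show ?thesis unfolding f_def by (simp add: mult.commute)
  qed
  have G: "Gc c = (\<Prod>a\<in>A. f a)" unfolding Gc_def A_def f_def ..
  have "(\<Prod>a\<in>U. f a) = (\<Prod>a\<in>A. f a) * (\<Prod>a\<in>B. f a)"
    unfolding UAB using finU UAB disj by (intro prod.union_disjoint) auto
  also have "(\<Prod>a\<in>B. f a) = (\<Prod>a\<in>A. f (c - a))"
    unfolding B_def using prod.reindex[OF injA, of f] by (simp add: comp_def)
  also have "\<dots> = (\<Prod>a\<in>A. f a)" by (intro prod.cong refl fsym)
  finally have 1: "(\<Prod>a\<in>U. f a) = Gc c ^ 2" unfolding G by (simp add: power2_eq_square)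
  have fU: "f a = rad a * rad (c - a) * rad c" if "a \<in> U" for a
  proof -
    have a: "0 < a" "a < c" "coprime a c" using that unfolding U_def by auto
    have "coprime (c - a) c" using a cop_aux[of a c] by simp
    then have "coprime (a * (c - a)) c" using a by simp
    moreover have "coprime a (c - a)" using a cop_aux[of a c] by simp
    ultimately show ?thesis unfolding f_def using a
      by (simp add: rad_mult)
  qed
  have "(\<Prod>a\<in>U. f a) = (\<Prod>a\<in>U. rad a) * (\<Prod>a\<in>U. rad (c - a)) * rad c ^ card U"
    by (simp add: fU prod.distrib)
  also have "(\<Prod>a\<in>U. rad (c - a)) = (\<Prod>a\<in>U. rad a)"
  proof -
    have "bij_betw (\<lambda>a. c - a) U U"
    proof (rule bij_betw_byWitness[where f' = "\<lambda>a. c - a"])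
      show "\<forall>a\<in>U. c - (c - a) = a" unfolding U_def by auto
      show "\<forall>a\<in>U. c - (c - a) = a" unfolding U_def by auto
      show "(\<lambda>a. c - a) ` U \<subseteq> U" unfolding U_def using cop_aux(1) by (auto intro: less_imp_le_nat)
      show "(\<lambda>a. c - a) ` U \<subseteq> U" unfolding U_def using cop_aux(1) by (auto intro: less_imp_le_nat)
    qed
    then show ?thesis by (rule prod.reindex_bij_betw)
  qed
  also have "card U = totient c"
  proof -
    have "U = totatives c"
    proof (rule subset_antisym; rule subsetI)
      fix x assume "x \<in> U" then show "x \<in> totatives c" unfolding U_def by (simp add: in_totatives_iff)
    next
      fix x assume x: "x \<in> totatives c"
      then have "x \<noteq> c" using c by (auto simp: in_totatives_iff)
      then show "x \<in> U" using x unfolding U_def by (simp add: in_totatives_iff)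
    qed
    then show ?thesis by (simp add: totient_def)
  qed
  finally show ?thesis using 1 by (simp add: power2_eq_square)
qed




lemma U_totatives:
  assumes "c \<ge> 2"
  shows "{a. 0 < a \<and> a < c \<and> coprime a c} = totatives c"
proof (rule subset_antisym; rule subsetI)
  fix x assume "x \<in> {a. 0 < a \<and> a < c \<and> coprime a c}" then show "x \<in> totatives c" by (simp add: in_totatives_iff)
next
  fix x assume x: "x \<in> totatives c"
  then have "x \<noteq> c" using assms by (auto simp: in_totatives_iff)
  then show "x \<in> {a. 0 < a \<and> a < c \<and> coprime a c}" using x by (simp add: in_totatives_iff)
qed

lemma lhs_bound:
  assumes c: "c \<ge> 3"
  shows "real (rad c) * real (totient c) ^ 2 * exp (- 2 - 16 * real c / real (totient c))
         \<le> real (Gc c) powr (2 / real (totient c))"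
proof -
  define U where "U = {a. 0 < a \<and> a < c \<and> coprime a c}"
  define ph where "ph = real (totient c)"
  have UT: "U = totatives c" unfolding U_def using c by (intro U_totatives) simp
  have cardU: "card U = totient c" unfolding UT totient_def ..
  have finU: "finite U" unfolding UT by simp
  have U0: "0 \<notin> U" unfolding U_def by simp
  have Usub: "U \<subseteq> {1..c}" unfolding U_def by auto
  have php: "ph > 0" unfolding ph_def using c by simp
  have Gsq: "Gc c ^ 2 = rad c ^ totient c * (\<Prod>a\<in>U. rad a) ^ 2"
    unfolding U_def using c by (rule Gc_sq)
  have radpos: "\<And>a. real (rad a) > 0" using rad_pos by simp
  have prodpos: "(\<Prod>a\<in>U. real (rad a)) > 0" using radpos by (simp add: prod_pos)
  have Gr: "real (Gc c) ^ 2 = real (rad c) ^ totient c * (\<Prod>a\<in>U. real (rad a)) ^ 2"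
    using arg_cong[OF Gsq, of real] by simp
  have Gpos: "real (Gc c) > 0"
  proof -
    have "real (Gc c) ^ 2 > 0" unfolding Gr using radpos prodpos by simp
    then have "real (Gc c) \<noteq> 0" by (metis zero_less_power2)
    then show ?thesis by simp
  qed
  have "ln (real (Gc c) ^ 2) = ln (real (rad c) ^ totient c * (\<Prod>a\<in>U. real (rad a)) ^ 2)"
    unfolding Gr ..
  also have "\<dots> = ph * ln (real (rad c)) + 2 * (\<Sum>a\<in>U. ln (real (rad a)))"
    using radpos prodpos finU by (simp add: ln_mult ln_realpow ln_prod ph_def)
  finally have lnG: "2 * ln (real (Gc c)) = ph * ln (real (rad c)) + 2 * (\<Sum>a\<in>U. ln (real (rad a)))"
    by (simp add: ln_realpow)
  have s1: "(\<Sum>a\<in>U. ln (real a)) \<ge> ph * ln ph - ph"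
  proof -
    have "fact (totient c) \<le> (\<Prod>U)" using finU U0 cardU by (rule prod_set_ge_fact)
    then have f1: "(fact (totient c) :: real) \<le> real (\<Prod>U)"
      by (metis of_nat_fact of_nat_le_iff)
    have f2: "0 < real (\<Prod>U)" using finU U0 by (metis gr0I of_nat_0_less_iff prod_pos)
    have "ln (fact (totient c) :: real) \<le> ln (real (\<Prod>U))"
      using f1 f2 by (subst ln_le_cancel_iff) auto
    also have "real (\<Prod>U) = (\<Prod>a\<in>U. real a)" by simp
    also have "ln \<dots> = (\<Sum>a\<in>U. ln (real a))"
    proof (rule ln_prod)
      show "finite U" by (rule finU)
      fix i assume "i \<in> U" then have "i \<noteq> 0" using U0 by metis
      then show "real i \<noteq> 0" by simp
    qed
    finally show ?thesis using ln_fact_bound[of "totient c"] unfolding ph_def by linarith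
  qed
  have s2: "(\<Sum>a\<in>U. ln (real a) - ln (real (rad a))) \<le> 8 * real c"
  proof -
    have "(\<Sum>a\<in>U. ln (real a) - ln (real (rad a))) \<le> (\<Sum>a\<in>{1..c}. ln (real a) - ln (real (rad a)))"
    proof (rule sum_mono2)
      show "finite {1..c}" by simp
      show "U \<subseteq> {1..c}" by (rule Usub)
      fix a assume "a \<in> {1..c} - U"
      then have "a > 0" by simp
      then have "real (rad a) \<le> real a" using rad_le by simp
      then show "0 \<le> ln (real a) - ln (real (rad a))" using radpos[of a] by simp
    qed
    also have "\<dots> \<le> 8 * real c" by (rule loss_total)
    finally show ?thesis .
  qed
  have S: "(\<Sum>a\<in>U. ln (real (rad a))) \<ge> ph * ln ph - ph - 8 * real c"
  proof -
    have "(\<Sum>a\<in>U. ln (real (rad a))) = (\<Sum>a\<in>U. ln (real a)) - (\<Sum>a\<in>U. ln (real a) - ln (real (rad a)))"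
      by (simp add: sum_subtractf)
    then show ?thesis using s1 s2 by linarith
  qed
  have e: "2 / ph * ln (real (Gc c)) = ln (real (rad c)) + 2 / ph * (\<Sum>a\<in>U. ln (real (rad a)))"
  proof -
    have "2 / ph * ln (real (Gc c)) = (2 * ln (real (Gc c))) / ph" by simp
    also have "\<dots> = (ph * ln (real (rad c)) + 2 * (\<Sum>a\<in>U. ln (real (rad a)))) / ph" unfolding lnG ..
    also have "\<dots> = ln (real (rad c)) + 2 / ph * (\<Sum>a\<in>U. ln (real (rad a)))"
      using php by (simp add: field_simps)
    finally show ?thesis .
  qed
  have "2 / ph * (\<Sum>a\<in>U. ln (real (rad a))) \<ge> 2 / ph * (ph * ln ph - ph - 8 * real c)"
    using S php by (intro mult_left_mono) auto
  also have "2 / ph * (ph * ln ph - ph - 8 * real c) = 2 * ln ph - 2 - 16 * real c / ph"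
    using php by (simp add: field_simps)
  finally have lb: "2 / ph * ln (real (Gc c)) \<ge> ln (real (rad c)) + 2 * ln ph + (- 2 - 16 * real c / ph)"
    unfolding e by linarith
  have "real (rad c) * ph ^ 2 * exp (- 2 - 16 * real c / ph) = exp (ln (real (rad c)) + 2 * ln ph + (- 2 - 16 * real c / ph))"
  proof -
    have "2 * ln ph = ln (ph^2)" by (simp add: ln_realpow)
    then have "exp (2 * ln ph) = ph^2" using php by simp
    then show ?thesis using radpos[of c] by (simp add: exp_add)
  qed
  also have "\<dots> \<le> exp (2 / ph * ln (real (Gc c)))" using lb by simp
  also have "\<dots> = real (Gc c) powr (2 / ph)" using Gpos by (simp add: powr_def)
  finally show ?thesis unfolding ph_def .
qed




lemma rhs_bound:
  assumes c: "c \<ge> 3"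
  shows "(\<Prod>q\<in>prime_factors c.
          real q powr (2 * real (multiplicity q c) - 1
                       - 2 / real (totient c) * real_of_int (Ec c (real q)))
          * ((real q - 1) / 2) ^ 2)
     \<le> real (totient c) ^ 2 * real (rad c) * (1/4) ^ card (prime_factors c)"
proof -
  let ?P = "prime_factors c"
  define ph where "ph = real (totient c)"
  have php: "ph > 0" unfolding ph_def using c by simp
  have c0: "c > 0" using c by simp
  have qge: "\<And>q. q \<in> ?P \<Longrightarrow> real q \<ge> 2"
  proof -
    fix q assume "q \<in> ?P"
    then have "prime q" by (simp add: prime_factors_multiplicity)
    then have "q \<ge> 2" by (rule prime_ge_2_nat)
    then show "real q \<ge> 2" by simp
  qed
  have "(\<Prod>q\<in>?P. real q powr (2 * real (multiplicity q c) - 1 - 2 / ph * real_of_int (Ec c (real q))) * ((real q - 1) / 2) ^ 2)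
      \<le> (\<Prod>q\<in>?P. (real q ^ multiplicity q c) ^ 2 * ((1 - 1 / real q) ^ 2 * (real q * (1/4))))"
  proof (rule prod_mono, rule conjI)
    fix q assume q: "q \<in> ?P"
    have q2: "real q \<ge> 2" using q by (rule qge)
    show "0 \<le> real q powr (2 * real (multiplicity q c) - 1 - 2 / ph * real_of_int (Ec c (real q))) * ((real q - 1) / 2) ^ 2"
      by simp
    have E: "real_of_int (Ec c (real q)) \<ge> 0" using Ec_nonneg[OF q c0] by simp
    have "real q powr (2 * real (multiplicity q c) - 1 - 2 / ph * real_of_int (Ec c (real q)))
          \<le> real q powr (2 * real (multiplicity q c) - 1)"
      using E php q2 by (intro powr_mono) auto
    also have "\<dots> = real q powr (real (2 * multiplicity q c)) / real q"
      using q2 by (simp add: powr_diff)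
    also have "\<dots> = real q ^ (2 * multiplicity q c) / real q"
      using q2 by (subst powr_realpow) auto
    finally have 1: "real q powr (2 * real (multiplicity q c) - 1 - 2 / ph * real_of_int (Ec c (real q)))
          \<le> real q ^ (2 * multiplicity q c) / real q" .
    have "real q powr (2 * real (multiplicity q c) - 1 - 2 / ph * real_of_int (Ec c (real q))) * ((real q - 1) / 2) ^ 2
        \<le> real q ^ (2 * multiplicity q c) / real q * ((real q - 1) / 2) ^ 2"
      by (intro mult_right_mono 1) simp
    also have "\<dots> = (real q ^ multiplicity q c) ^ 2 * ((1 - 1 / real q) ^ 2 * (real q * (1/4)))"
    proof -
      have a: "real q ^ (2 * multiplicity q c) = (real q ^ multiplicity q c)^2"
        by (metis power_mult mult.commute)
      have b: "(1 - 1 / real q) ^ 2 * (real q * (1/4)) = ((real q - 1) / 2) ^ 2 / real q"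
        using q2 by (simp add: field_simps power2_eq_square)
      show ?thesis unfolding a b by simp
    qed
    finally show "real q powr (2 * real (multiplicity q c) - 1 - 2 / ph * real_of_int (Ec c (real q))) * ((real q - 1) / 2) ^ 2
        \<le> (real q ^ multiplicity q c) ^ 2 * ((1 - 1 / real q) ^ 2 * (real q * (1/4)))" .
  qed
  also have "\<dots> = (\<Prod>q\<in>?P. real q ^ multiplicity q c) ^ 2 * ((\<Prod>q\<in>?P. 1 - 1 / real q) ^ 2 * ((\<Prod>q\<in>?P. real q) * (\<Prod>q\<in>?P. 1/4)))"
    by (simp only: prod.distrib prod_power_distrib)
  also have "(\<Prod>q\<in>?P. real q ^ multiplicity q c) = real c"
  proof -
    have "(\<Prod>q\<in>?P. q ^ multiplicity q c) = c" using c0 by (simp add: prod_prime_factors)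
    then have "real (\<Prod>q\<in>?P. q ^ multiplicity q c) = real c" by (simp only:)
    then show ?thesis by (simp only: of_nat_prod of_nat_power)
  qed
  also have "(\<Prod>q\<in>?P. 1 - 1 / real q) = ph / real c"
  proof -
    have "ph = real c * (\<Prod>q\<in>?P. 1 - 1 / real q)" unfolding ph_def by (rule totient_formula2)
    then show ?thesis using c0 by (simp add: field_simps)
  qed
  also have "(\<Prod>q\<in>?P. real q) = real (rad c)" unfolding rad_def by (simp only: of_nat_prod)
  also have "(\<Prod>q\<in>?P. (1/4::real)) = (1/4) ^ card ?P" by (rule prod_constant)
  also have "real c ^ 2 * ((ph / real c) ^ 2 * (real (rad c) * (1/4) ^ card ?P)) = ph ^ 2 * real (rad c) * (1/4) ^ card ?P"
  proof -
    have "real c ^ 2 * (ph / real c) ^ 2 = ph ^ 2" using c0 by (simp add: power_divide)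
    then show ?thesis by (metis mult.assoc)
  qed
  finally show ?thesis unfolding ph_def .
qed




theorem theorem2:
  shows "\<exists>k4::real. k4 > 0 \<and> (\<forall>c::nat. c \<ge> 3 \<longrightarrow>
     real (Gc c) powr (2 / real (totient c)) >
       k4 * (\<Prod>q\<in>prime_factors c.
          real q powr (2 * real (multiplicity q c) - 1
                       - 2 / real (totient c) * real_of_int (Ec c (real q)))
          * ((real q - 1) / 2) ^ 2))"
proof (intro exI[of _ "exp (-515)"] conjI allI impI)
  show "(0::real) < exp (-515)" by simp
  fix c :: nat assume c: "c \<ge> 3"
  let ?P = "prime_factors c"
  define ph where "ph = real (totient c)"
  define w where "w = real (card ?P)"
  define X where "X = (\<Prod>q\<in>prime_factors c.
          real q powr (2 * real (multiplicity q c) - 1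
                       - 2 / real (totient c) * real_of_int (Ec c (real q)))
          * ((real q - 1) / 2) ^ 2)"
  have php: "ph > 0" unfolding ph_def using c by simp
  have radp: "real (rad c) > 0" using rad_pos by simp
  have Pne: "?P \<noteq> {}"
  proof -
    obtain p where p: "prime p" "p dvd c" using prime_factor_nat[of c] c by auto
    then have "p \<in> ?P" using c by (simp add: prime_factors_dvd)
    then show ?thesis by blast
  qed
  define r where "r = real c / ph"
  have r0: "r \<ge> 0" unfolding r_def using php by simp
  have r2: "r^2 \<le> 8 * w" unfolding r_def ph_def w_def using c Pne by (intro c_over_phi) auto
  have "0 \<le> (r - 64)^2" by simp
  then have "16 * r \<le> r^2 / 8 + 512" by (simp add: power2_eq_square algebra_simps)
  then have r16: "16 * r \<le> w + 512" using r2 by linarith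
  have "16 * real c / ph = 16 * r" unfolding r_def by simp
  then have "exp (- 514 - w) \<le> exp (- 2 - 16 * real c / ph)" using r16 by simp
  then have "real (rad c) * ph ^ 2 * exp (- 514 - w) \<le> real (rad c) * ph ^ 2 * exp (- 2 - 16 * real c / ph)"
    using radp php by (intro mult_left_mono) auto
  also have "\<dots> \<le> real (Gc c) powr (2 / ph)" unfolding ph_def using c by (rule lhs_bound)
  finally have L: "real (rad c) * ph ^ 2 * exp (- 514 - w) \<le> real (Gc c) powr (2 / ph)" .
  have R: "X \<le> ph ^ 2 * real (rad c) * (1/4) ^ card ?P"
    unfolding X_def ph_def using c by (rule rhs_bound)
  have q: "(1/4::real) ^ card ?P \<le> exp (- w)"
  proof -
    have "exp 1 \<le> (4::real)" using exp_le by simp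
    then have "exp 1 ^ card ?P \<le> (4::real) ^ card ?P" by (intro power_mono) auto
    then have "exp w \<le> 4 ^ card ?P" unfolding w_def by (simp add: exp_of_nat_mult[symmetric])
    then have "1 / (4::real) ^ card ?P \<le> 1 / exp w" by (intro divide_left_mono) auto
    then show ?thesis by (simp add: exp_minus power_one_over inverse_eq_divide)
  qed
  have "exp (-515) * X \<le> exp (-515) * (ph ^ 2 * real (rad c) * (1/4) ^ card ?P)"
    using R by simp
  also have "\<dots> \<le> exp (-515) * (ph ^ 2 * real (rad c) * exp (- w))"
    using q php radp by (intro mult_left_mono) auto
  also have "\<dots> < real (rad c) * ph ^ 2 * exp (- 514 - w)"
  proof -
    have "exp (-515) * exp (- w) < exp (- 514 - w)" by (simp add: exp_add[symmetric])
    then have "(ph ^ 2 * real (rad c)) * (exp (-515) * exp (- w)) < (ph ^ 2 * real (rad c)) * exp (- 514 - w)"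
      using php radp by (intro mult_strict_left_mono) auto
    then show ?thesis by (simp add: algebra_simps)
  qed
  also have "\<dots> \<le> real (Gc c) powr (2 / ph)" by (rule L)
  finally show "exp (-515) * X < real (Gc c) powr (2 / real (totient c))" unfolding ph_def .
qed


end
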